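(* Let $n$ be a positive integer and let $a,b$ be integers with $0\le a,b\le n$. Then there exists an orientation of the $n$-cube $Q_n$ in which every vertex has in-degree equal to $a$ or to $b$ if and only if there exist non-negative integers $s$ and $t$ such that $s+t=2^n$ and $as+bt=n2^{n-1}$.
   Context: The $n$-cube $Q_n$ is the graph whose vertices are the binary $n$-tuples, two vertices being adjacent iff they differ in exactly one coordinate. An orientation assigns to each edge a head and a tail; the in-degree of a vertex is the number of edges whose head is that vertex. *)

theory Defs
  imports Main
begin

definition cube_vertices :: "nat \<Rightarrow> bool list set" where
  "cube_vertices n = {xs. length xs = n}"

definition cube_adj :: "nat \<Rightarrow> bool list \<Rightarrow> bool list \<Rightarrow> bool" where
  "cube_adj n u v \<longleftrightarrow> u \<in> cube_vertices n \<and> v \<in> cube_vertices n \<and>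
     card {i. i < n \<and> u ! i \<noteq> v ! i} = 1"

definition cube_edges :: "nat \<Rightarrow> bool list set set" where
  "cube_edges n = {{u, v} | u v. cube_adj n u v}"

text \<open>An orientation assigns to every edge its head, one of its two endpoints
  (the tail is the other endpoint).\<close>
definition is_orientation :: "nat \<Rightarrow> (bool list set \<Rightarrow> bool list) \<Rightarrow> bool" where
  "is_orientation n h \<longleftrightarrow> (\<forall>e \<in> cube_edges n. h e \<in> e)"

definition in_degree :: "nat \<Rightarrow> (bool list set \<Rightarrow> bool list) \<Rightarrow> bool list \<Rightarrow> nat" where
  "in_degree n h v = card {e \<in> cube_edges n. h e = v}"

end

theory Submission
  imports Defs
begin

unbundle bit_operations_syntax

definition flip :: "bool list \<Rightarrow> nat \<Rightarrow> bool list" where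
  "flip x i = x[i := \<not> x!i]"

lemma length_flip[simp]: "length (flip x i) = length x" by (simp add: flip_def)
lemma flip_nth: "i < length x \<Longrightarrow> flip x i ! j = (if j = i then \<not> x!i else x!j)"
  by (simp add: flip_def nth_list_update)
lemma flip_flip[simp]: "flip (flip x i) i = x"
  by (cases "i < length x") (simp_all add: flip_def list_update_beyond)
lemma flip_neq: "i < length x \<Longrightarrow> flip x i \<noteq> x"
  by (metis flip_nth)
lemma flip_inj: "i < length x \<Longrightarrow> j < length x \<Longrightarrow> flip x i = flip x j \<Longrightarrow> i = j"
  by (metis flip_nth)

lemma adj_iff: "cube_adj n u v \<longleftrightarrow> length u = n \<and> (\<exists>i<n. v = flip u i)"
proof
  assume a: "cube_adj n u v"
  then have lu: "length u = n" and lv: "length v = n" and c: "card {i. i < n \<and> u ! i \<noteq> v ! i} = 1"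
    by (auto simp: cube_adj_def cube_vertices_def)
  from c obtain i where S: "{i. i < n \<and> u ! i \<noteq> v ! i} = {i}" by (auto simp: card_Suc_eq)
  then have "i < n" "u!i \<noteq> v!i" by auto
  moreover have "v = flip u i"
  proof (rule nth_equalityI)
    show "length v = length (flip u i)" using lu lv by simp
    fix j assume "j < length v"
    then show "v ! j = flip u i ! j" using S lu lv \<open>i<n\<close> \<open>u!i \<noteq> v!i\<close>
      by (auto simp: flip_nth)
  qed
  ultimately show "length u = n \<and> (\<exists>i<n. v = flip u i)" using lu by auto
next
  assume "length u = n \<and> (\<exists>i<n. v = flip u i)"
  then obtain i where lu: "length u = n" and i: "i < n" and v: "v = flip u i" by auto
  have "{j. j < n \<and> u ! j \<noteq> v ! j} = {i}" using lu i v by (auto simp: flip_nth)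
  then show "cube_adj n u v" using lu v by (simp add: cube_adj_def cube_vertices_def)
qed

lemma edges_at: assumes "length v = n"
  shows "{e \<in> cube_edges n. v \<in> e} = (\<lambda>i. {v, flip v i}) ` {..<n}"
proof
  show "{e \<in> cube_edges n. v \<in> e} \<subseteq> (\<lambda>i. {v, flip v i}) ` {..<n}"
  proof
    fix e assume "e \<in> {e \<in> cube_edges n. v \<in> e}"
    then obtain u w where e: "e = {u,w}" "cube_adj n u w" "v \<in> e" by (auto simp: cube_edges_def)
    then obtain i where i: "i < n" "w = flip u i" "length u = n" by (auto simp: adj_iff)
    show "e \<in> (\<lambda>i. {v, flip v i}) ` {..<n}"
    proof (cases "v = u")
      case True then show ?thesis using e i by auto
    next
      case False then have "v = w" using e by auto
      then have "u = flip v i" using i by simp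
      then show ?thesis using e i by auto
    qed
  qed
next
  show "(\<lambda>i. {v, flip v i}) ` {..<n} \<subseteq> {e \<in> cube_edges n. v \<in> e}"
    using assms by (auto simp: cube_edges_def adj_iff)
qed

lemma edge_form: "e \<in> cube_edges n \<Longrightarrow> \<exists>v i. length v = n \<and> i < n \<and> e = {v, flip v i}"
  by (auto simp: cube_edges_def adj_iff)

lemma edge_sub: "e \<in> cube_edges n \<Longrightarrow> e \<subseteq> cube_vertices n"
  by (auto simp: cube_edges_def adj_iff cube_vertices_def)

lemma finite_V: "finite (cube_vertices n)"
proof -
  have "cube_vertices n = {xs. set xs \<subseteq> (UNIV::bool set) \<and> length xs = n}"
    by (auto simp: cube_vertices_def)
  then show ?thesis using finite_lists_length_eq[of "UNIV::bool set" n] by simp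
qed

lemma card_V: "card (cube_vertices n) = 2 ^ n"
proof -
  have "cube_vertices n = {xs. set xs \<subseteq> (UNIV::bool set) \<and> length xs = n}"
    by (auto simp: cube_vertices_def)
  then show ?thesis using card_lists_length_eq[of "UNIV::bool set" n] by simp
qed

lemma finite_E: "finite (cube_edges n)"
proof -
  have "cube_edges n \<subseteq> Pow (cube_vertices n)" using edge_sub by auto
  then show ?thesis using finite_V by (meson finite_Pow_iff finite_subset)
qed

definition good :: "nat \<Rightarrow> (bool list \<Rightarrow> nat \<Rightarrow> bool) \<Rightarrow> nat set \<Rightarrow> bool" where
  "good n g D \<longleftrightarrow> (\<forall>x i. length x = n \<longrightarrow> i < n \<longrightarrow> (g (flip x i) i \<longleftrightarrow> \<not> g x i))
     \<and> (\<forall>x. length x = n \<longrightarrow> card {i. i < n \<and> g x i} \<in> D)"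

lemma bridge0:
  assumes anti: "\<And>x i. length x = n \<Longrightarrow> i < n \<Longrightarrow> g (flip x i) i \<longleftrightarrow> \<not> g x i"
  shows "\<exists>h. is_orientation n h \<and> (\<forall>v \<in> cube_vertices n. in_degree n h v = card {i. i < n \<and> g v i})"
proof -
  define Hd where "Hd e w \<longleftrightarrow> w \<in> e \<and> (\<exists>i<n. e = {w, flip w i} \<and> g w i)" for e w
  define h where "h e = (SOME w. Hd e w)" for e
  have key: "Hd {v, flip v i} w \<longleftrightarrow> (w = v \<and> g v i) \<or> (w = flip v i \<and> \<not> g v i)"
    if v: "length v = n" and i: "i < n" for v i w
  proof
    assume "Hd {v, flip v i} w"
    then obtain j where w: "w \<in> {v, flip v i}" and j: "j < n" "{v, flip v i} = {w, flip w j}" "g w j"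
      unfolding Hd_def by blast
    show "(w = v \<and> g v i) \<or> (w = flip v i \<and> \<not> g v i)"
    proof (cases "w = v")
      case True
      then have "flip v i = flip v j" using j flip_neq[of i v] v i by (auto simp: doubleton_eq_iff)
      then have "i = j" using flip_inj[of i v j] v i j by simp
      then show ?thesis using True j by simp
    next
      case False
      then have w2: "w = flip v i" using w by auto
      then have "v = flip w j" using j False by (auto simp: doubleton_eq_iff)
      then have "flip w i = flip w j" using w2 by simp
      then have "i = j" using flip_inj[of i w j] v i j w2 by simp
      then show ?thesis using w2 j anti[OF v i] by simp
    qed
  next
    assume "(w = v \<and> g v i) \<or> (w = flip v i \<and> \<not> g v i)"
    then show "Hd {v, flip v i} w"
    proof
      assume "w = v \<and> g v i" then show ?thesis using i unfolding Hd_def by blast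
    next
      assume a: "w = flip v i \<and> \<not> g v i"
      then have "{v, flip v i} = {w, flip w i}" "g w i" using anti[OF v i] by auto
      then show ?thesis using i a unfolding Hd_def by blast
    qed
  qed
  have hval: "h {v, flip v i} = (if g v i then v else flip v i)" if v: "length v = n" and i: "i < n" for v i
  proof -
    have ex: "Hd {v, flip v i} (if g v i then v else flip v i)" using key[OF v i] by auto
    then have "Hd {v, flip v i} (h {v, flip v i})" unfolding h_def by (rule someI)
    then show ?thesis using key[OF v i] by auto
  qed
  have orient: "is_orientation n h"
    unfolding is_orientation_def
  proof
    fix e assume "e \<in> cube_edges n"
    then obtain v i where "length v = n" "i < n" "e = {v, flip v i}" using edge_form by blast
    then show "h e \<in> e" using hval by auto
  qed
  have deg: "in_degree n h v = card {i. i < n \<and> g v i}" if v: "length v = n" for v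
  proof -
    have "{e \<in> cube_edges n. h e = v} = {e \<in> cube_edges n. v \<in> e \<and> h e = v}"
      using orient unfolding is_orientation_def by auto
    also have "\<dots> = (\<lambda>i. {v, flip v i}) ` {i. i < n \<and> g v i}"
    proof -
      have "{e \<in> cube_edges n. v \<in> e \<and> h e = v} = {e \<in> {e \<in> cube_edges n. v \<in> e}. h e = v}" by auto
      also have "\<dots> = {e \<in> (\<lambda>i. {v, flip v i}) ` {..<n}. h e = v}" using edges_at[OF v] by simp
      also have "\<dots> = (\<lambda>i. {v, flip v i}) ` {i \<in> {..<n}. h {v, flip v i} = v}"
        by auto
      also have "{i \<in> {..<n}. h {v, flip v i} = v} = {i. i < n \<and> g v i}"
      proof -
        have "(h {v, flip v i} = v) = g v i" if i: "i < n" for i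
        proof -
          have "flip v i \<noteq> v" using flip_neq[of i v] v i by simp
          then show ?thesis using hval[OF v i] by simp
        qed
        then show ?thesis by auto
      qed
      finally show ?thesis .
    qed
    finally have "{e \<in> cube_edges n. h e = v} = (\<lambda>i. {v, flip v i}) ` {i. i < n \<and> g v i}" .
    moreover have "inj_on (\<lambda>i. {v, flip v i}) {i. i < n \<and> g v i}"
    proof (rule inj_onI)
      fix i j assume i: "i \<in> {i. i < n \<and> g v i}" and j: "j \<in> {i. i < n \<and> g v i}"
        and eq: "{v, flip v i} = {v, flip v j}"
      then have "flip v i = flip v j" using flip_neq[of i v] flip_neq[of j v] v
        by (auto simp: doubleton_eq_iff)
      then show "i = j" using flip_inj[of i v j] v i j by auto
    qed
    ultimately show ?thesis unfolding in_degree_def by (simp add: card_image)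
  qed
  show ?thesis using orient deg by (auto simp: cube_vertices_def)
qed

lemma bridge:
  assumes g: "good n g D"
  shows "\<exists>h. is_orientation n h \<and> (\<forall>v \<in> cube_vertices n. in_degree n h v \<in> D)"
proof -
  have "\<And>x i. length x = n \<Longrightarrow> i < n \<Longrightarrow> g (flip x i) i \<longleftrightarrow> \<not> g x i"
    using g by (auto simp: good_def)
  from bridge0[of n g, OF this] obtain h where "is_orientation n h"
    "\<forall>v \<in> cube_vertices n. in_degree n h v = card {i. i < n \<and> g v i}" by blast
  then show ?thesis using g by (auto simp: good_def cube_vertices_def)
qed

lemma sum_indeg:
  assumes "is_orientation n h"
  shows "(\<Sum>v \<in> cube_vertices n. in_degree n h v) = card (cube_edges n)"
proof -
  have hv: "\<And>e. e \<in> cube_edges n \<Longrightarrow> h e \<in> cube_vertices n"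
    using assms edge_sub unfolding is_orientation_def by blast
  have "(\<Sum>v \<in> cube_vertices n. in_degree n h v) = (\<Sum>v \<in> cube_vertices n. \<Sum>e \<in> cube_edges n. if h e = v then 1 else 0)"
    unfolding in_degree_def using finite_E by (simp add: sum.If_cases Int_def)
  also have "\<dots> = (\<Sum>e \<in> cube_edges n. \<Sum>v \<in> cube_vertices n. if h e = v then 1 else 0)"
    by (rule sum.swap)
  also have "\<dots> = (\<Sum>e \<in> cube_edges n. 1)"
    using hv finite_V by (intro sum.cong) (auto simp: sum.If_cases Int_def)
  finally show ?thesis by simp
qed

lemma card_E: "2 * card (cube_edges n) = n * 2 ^ n"
proof -
  have a1: "\<And>x i. length x = n \<Longrightarrow> i < n \<Longrightarrow> (\<lambda>x i. x ! i) (flip x i) i \<longleftrightarrow> \<not> (\<lambda>x i. x ! i) x i"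
    by (simp add: flip_nth)
  have a2: "\<And>x i. length x = n \<Longrightarrow> i < n \<Longrightarrow> (\<lambda>x i. \<not> x ! i) (flip x i) i \<longleftrightarrow> \<not> (\<lambda>x i. \<not> x ! i) x i"
    by (simp add: flip_nth)
  obtain h1 where h1: "is_orientation n h1" "\<forall>v \<in> cube_vertices n. in_degree n h1 v = card {i. i < n \<and> v ! i}"
    using bridge0[of n "\<lambda>x i. x ! i", OF a1] by blast
  obtain h2 where h2: "is_orientation n h2" "\<forall>v \<in> cube_vertices n. in_degree n h2 v = card {i. i < n \<and> \<not> v ! i}"
    using bridge0[of n "\<lambda>x i. \<not> x ! i", OF a2] by blast
  have "\<forall>v \<in> cube_vertices n. in_degree n h1 v + in_degree n h2 v = n"
  proof
    fix v assume "v \<in> cube_vertices n"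
    have "card {i. i < n \<and> v ! i} + card {i. i < n \<and> \<not> v ! i} = card ({i. i < n \<and> v ! i} \<union> {i. i < n \<and> \<not> v ! i})"
      by (rule card_Un_disjoint[symmetric]) auto
    also have "{i. i < n \<and> v ! i} \<union> {i. i < n \<and> \<not> v ! i} = {..<n}" by auto
    finally show "in_degree n h1 v + in_degree n h2 v = n" using h1 h2 \<open>v \<in> cube_vertices n\<close> by simp
  qed
  then have "(\<Sum>v \<in> cube_vertices n. in_degree n h1 v + in_degree n h2 v) = n * 2 ^ n"
    using card_V by simp
  then show ?thesis using sum_indeg[OF h1(1)] sum_indeg[OF h2(1)] by (simp add: sum.distrib)
qed


lemma xor_lt: "a < 2 ^ m \<Longrightarrow> b < 2 ^ m \<Longrightarrow> (a::nat) XOR b < 2 ^ m"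
proof -
  assume "a < 2 ^ m" "b < 2 ^ m"
  then have "take_bit m a = a" "take_bit m b = b" by (simp_all add: take_bit_nat_eq_self_iff)
  then have "take_bit m (a XOR b) = a XOR b" by (simp add: take_bit_xor)
  then show ?thesis by (metis take_bit_nat_less_exp)
qed

lemma xor_cancel: "(c::nat) XOR (c XOR j) = j"
  by (simp add: xor.assoc[symmetric])

lemma count_block: assumes "c < 2 ^ m" "r \<le> 2 ^ m"
  shows "card {j. j < 2 ^ m \<and> (c::nat) XOR j < r} = r"
proof -
  have "bij_betw (\<lambda>j. c XOR j) {j. j < 2 ^ m \<and> c XOR j < r} {..<r}"
  proof (rule bij_betw_byWitness[where f' = "\<lambda>v. c XOR v"])
    show "(\<lambda>j. c XOR j) ` {j. j < 2 ^ m \<and> c XOR j < r} \<subseteq> {..<r}" by auto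
    show "(\<lambda>v. c XOR v) ` {..<r} \<subseteq> {j. j < 2 ^ m \<and> c XOR j < r}"
    proof
      fix y assume "y \<in> (\<lambda>v. c XOR v) ` {..<r}"
      then obtain v where v: "v < r" "y = c XOR v" by auto
      then have "v < 2 ^ m" using assms by simp
      then show "y \<in> {j. j < 2 ^ m \<and> c XOR j < r}" using v assms xor_lt[of c m v] by (simp add: xor_cancel)
    qed
    show "\<forall>x \<in> {j. j < 2 ^ m \<and> c XOR j < r}. c XOR (c XOR x) = x" by (simp add: xor_cancel)
    show "\<forall>y \<in> {..<r}. c XOR (c XOR y) = y" by (simp add: xor_cancel)
  qed
  then show ?thesis by (simp add: bij_betw_same_card)
qed

lemma count_blocks: assumes "c < 2 ^ m" "r \<le> 2 ^ m"
  shows "card {i. i < q * 2 ^ m \<and> (c::nat) XOR (i mod 2 ^ m) < r} = q * r"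
proof (induction q)
  case 0 then show ?case by simp
next
  case (Suc q)
  let ?M = "2 ^ m :: nat"
  have "{i. i < Suc q * ?M \<and> c XOR (i mod ?M) < r} =
        {i. i < q * ?M \<and> c XOR (i mod ?M) < r} \<union> (\<lambda>j. q * ?M + j) ` {j. j < ?M \<and> c XOR j < r}"
  proof (rule set_eqI)
    fix i
    show "i \<in> {i. i < Suc q * ?M \<and> c XOR (i mod ?M) < r} \<longleftrightarrow>
          i \<in> {i. i < q * ?M \<and> c XOR (i mod ?M) < r} \<union> (\<lambda>j. q * ?M + j) ` {j. j < ?M \<and> c XOR j < r}"
    proof
      assume a: "i \<in> {i. i < Suc q * ?M \<and> c XOR (i mod ?M) < r}"
      show "i \<in> {i. i < q * ?M \<and> c XOR (i mod ?M) < r} \<union> (\<lambda>j. q * ?M + j) ` {j. j < ?M \<and> c XOR j < r}"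
      proof (cases "i < q * ?M")
        case True then show ?thesis using a by auto
      next
        case False
        then obtain j where j: "i = q * ?M + j" by (metis add_diff_inverse)
        then have "j < ?M" using a by simp
        then have "i mod ?M = j" using j by simp
        then show ?thesis using a j \<open>j < ?M\<close> by auto
      qed
    next
      assume "i \<in> {i. i < q * ?M \<and> c XOR (i mod ?M) < r} \<union> (\<lambda>j. q * ?M + j) ` {j. j < ?M \<and> c XOR j < r}"
      then show "i \<in> {i. i < Suc q * ?M \<and> c XOR (i mod ?M) < r}" by auto
    qed
  qed
  moreover have "card ((\<lambda>j. q * ?M + j) ` {j. j < ?M \<and> c XOR j < r}) = r"
    by (subst card_image) (auto simp: count_block[OF assms])
  moreover have "{i. i < q * ?M \<and> c XOR (i mod ?M) < r} \<inter> (\<lambda>j. q * ?M + j) ` {j. j < ?M \<and> c XOR j < r} = {}"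
    by auto
  ultimately show ?case using Suc by (simp add: card_Un_disjoint)
qed

primrec lam :: "nat \<Rightarrow> bool list \<Rightarrow> nat \<Rightarrow> nat" where
  "lam M x 0 = 0"
| "lam M x (Suc k) = lam M x k XOR (if x ! k then k mod M else 0)"

lemma lam_lt: "lam (2 ^ m) x k < 2 ^ m"
  by (induction k) (auto intro!: xor_lt)

lemma lam_flip: "i < length x \<Longrightarrow> lam M (flip x i) k = (if i < k then lam M x k XOR (i mod M) else lam M x k)"
proof (induction k)
  case 0 then show ?case by simp
next
  case (Suc k)
  show ?case
  proof (cases "i = k")
    case True
    then show ?thesis using Suc by (auto simp: flip_nth xor.assoc)
  next
    case False
    then show ?thesis using Suc by (auto simp: flip_nth ac_simps)
  qed
qed

definition pc :: "bool list \<Rightarrow> nat" where "pc x = card {j. j < length x \<and> x ! j}"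

lemma pc_flip: assumes "i < length x" shows "even (pc (flip x i)) \<longleftrightarrow> \<not> even (pc x)"
proof (cases "x ! i")
  case True
  have "{j. j < length (flip x i) \<and> flip x i ! j} = {j. j < length x \<and> x ! j} - {i}"
    using assms True by (auto simp: flip_nth)
  moreover have "i \<in> {j. j < length x \<and> x ! j}" using assms True by auto
  ultimately have "pc (flip x i) = pc x - 1" "pc x \<ge> 1" unfolding pc_def
    by (auto simp: card_Diff_singleton Suc_le_eq card_gt_0_iff)
  then show ?thesis by (cases "pc x") auto
next
  case False
  have "{j. j < length (flip x i) \<and> flip x i ! j} = insert i {j. j < length x \<and> x ! j}"
    using assms False by (auto simp: flip_nth)
  moreover have "i \<notin> {j. j < length x \<and> x ! j}" using assms False by auto
  ultimately have "pc (flip x i) = pc x + 1" unfolding pc_def by simp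
  then show ?thesis by simp
qed

lemma core:
  assumes r: "r \<le> 2 ^ m"
  shows "\<exists>g. good (q * 2 ^ m + q * r) g {0, q * 2 ^ m}"
proof -
  define P where "P = q * 2 ^ m"
  define N where "N = P + q * r"
  define mk where "mk x \<longleftrightarrow> lam (2 ^ m) x P < r" for x
  define g where "g x i = (if even (pc x) then i < P \<and> mk x else \<not> (i < P \<and> mk (flip x i)))" for x i
  have anti: "g (flip x i) i \<longleftrightarrow> \<not> g x i" if "length x = N" "i < N" for x i
  proof (cases "even (pc x)")
    case True
    then have "\<not> even (pc (flip x i))" using pc_flip[of i x] that by simp
    then show ?thesis using True unfolding g_def by simp
  next
    case False
    then have "even (pc (flip x i))" using pc_flip[of i x] that by simp
    then show ?thesis using False unfolding g_def by simp
  qed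
  have deg: "card {i. i < N \<and> g x i} \<in> {0, P}" if lx: "length x = N" for x
  proof (cases "even (pc x)")
    case True
    then have "{i. i < N \<and> g x i} = (if mk x then {..<P} else {})"
      unfolding g_def N_def by auto
    then show ?thesis by simp
  next
    case False
    define c where "c = lam (2 ^ m) x P"
    have c: "c < 2 ^ m" unfolding c_def by (rule lam_lt)
    have "{i. i < N \<and> g x i} = {..<N} - {i. i < P \<and> c XOR (i mod 2 ^ m) < r}"
    proof -
      have "\<And>i. i < P \<Longrightarrow> mk (flip x i) \<longleftrightarrow> c XOR (i mod 2 ^ m) < r"
        unfolding mk_def c_def using lx N_def by (simp add: lam_flip)
      then show ?thesis using False unfolding g_def N_def by auto
    qed
    moreover have "card {i. i < P \<and> c XOR (i mod 2 ^ m) < r} = q * r"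
      unfolding P_def by (rule count_blocks[OF c r])
    moreover have "{i. i < P \<and> c XOR (i mod 2 ^ m) < r} \<subseteq> {..<N}" unfolding N_def by auto
    ultimately have "card {i. i < N \<and> g x i} = N - q * r"
      by (simp add: card_Diff_subset)
    then show ?thesis unfolding N_def by simp
  qed
  have "good N g {0, P}" unfolding good_def using anti deg by blast
  then show ?thesis unfolding N_def P_def by blast
qed

lemma rev_good: assumes "good n g D" shows "good n (\<lambda>x i. \<not> g x i) ((\<lambda>d. n - d) ` D)"
proof -
  have "card {i. i < n \<and> \<not> g x i} = n - card {i. i < n \<and> g x i}" for x
  proof -
    have "{i. i < n \<and> \<not> g x i} = {..<n} - {i. i < n \<and> g x i}" by auto
    then show ?thesis by (simp add: card_Diff_subset subset_eq)
  qed
  then show ?thesis using assms unfolding good_def by auto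
qed

lemma take_flip: "i < k \<Longrightarrow> take k (flip x i) = flip (take k x) i"
  by (simp add: flip_def take_update_swap)

lemma pad_good: assumes "good N g D" shows "\<exists>g'. good (N + 2) g' ((\<lambda>d. d + 1) ` D)"
proof -
  define g' where "g' x i = (if i < N then g (take N x) i else if i = N then x ! N \<noteq> x ! (N+1) else x ! N = x ! (N+1))" for x i
  have anti: "g' (flip x i) i \<longleftrightarrow> \<not> g' x i" if lx: "length x = N + 2" and il: "i < N + 2" for x i
  proof -
    consider "i < N" | "i = N" | "i = N + 1" using il by linarith
    then show ?thesis
    proof cases
      case 1
      then show ?thesis using assms lx il unfolding g'_def good_def by (simp add: take_flip)
    next
      case 2
      then show ?thesis using lx il unfolding g'_def by (simp add: flip_nth)
    next
      case 3
      then show ?thesis using lx il unfolding g'_def by (simp add: flip_nth)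
    qed
  qed
  have deg: "card {i. i < N + 2 \<and> g' x i} = card {i. i < N \<and> g (take N x) i} + 1" for x
  proof -
    have "{i. i < N + 2 \<and> g' x i} = insert (if x ! N \<noteq> x ! (N+1) then N else N + 1) {i. i < N \<and> g (take N x) i}"
      unfolding g'_def by auto
    then show ?thesis by simp
  qed
  have "good (N + 2) g' ((\<lambda>d. d + 1) ` D)"
    unfolding good_def
  proof (intro conjI allI impI)
    fix x :: "bool list" and i :: nat assume "length x = N + 2" "i < N + 2"
    then show "g' (flip x i) i = (\<not> g' x i)" by (rule anti)
  next
    fix x :: "bool list" assume "length x = N + 2"
    then have "length (take N x) = N" by simp
    then have "card {i. i < N \<and> g (take N x) i} \<in> D" using assms unfolding good_def by blast
    then show "card {i. i < N + 2 \<and> g' x i} \<in> (\<lambda>d. d + 1) ` D" using deg by auto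
  qed
  then show ?thesis by blast
qed

lemma pad_many: assumes "good N g {c, d}" shows "\<exists>g'. good (N + 2 * a) g' {c + a, d + a}"
proof (induction a)
  case 0 then show ?case using assms by auto
next
  case (Suc a)
  then obtain g' where "good (N + 2 * a) g' {c + a, d + a}" by blast
  from pad_good[OF this] obtain g'' where "good (N + 2 * a + 2) g'' ((\<lambda>d. d + 1) ` {c + a, d + a})" by blast
  then show ?case by (auto simp: algebra_simps)
qed


lemma factor2: "0 < b \<Longrightarrow> b dvd N * 2 ^ j \<Longrightarrow> \<exists>m q. b = 2 ^ m * q \<and> q dvd (N::nat)"
proof (induction j arbitrary: b)
  case 0 then show ?case by (rule_tac x=0 in exI) auto
next
  case (Suc j)
  show ?case
  proof (cases "even b")
    case True
    then obtain b' where b: "b = 2 * b'" by blast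
    then have "b' dvd N * 2 ^ j" using Suc.prems by (simp add: mult.assoc mult.left_commute)
    moreover have "0 < b'" using b Suc.prems by simp
    ultimately obtain m q where "b' = 2 ^ m * q" "q dvd N" using Suc.IH by blast
    then show ?thesis using b by (rule_tac x="Suc m" in exI) auto
  next
    case False
    then have "coprime b (2 ^ Suc j)" by simp
    then have "b dvd N" using Suc.prems(2) coprime_dvd_mult_left_iff by blast
    then show ?thesis by (rule_tac x=0 in exI) auto
  qed
qed

lemma good0: "good 0 g D \<longleftrightarrow> 0 \<in> D" unfolding good_def by auto

lemma main_le:
  fixes n a b s t :: nat
  assumes ab: "a \<le> b" and abn: "a + b \<le> n" and st: "s + t = 2 ^ n"
    and eq: "a * s + b * t = n * 2 ^ (n - 1)" and n: "n > 0"
  shows "\<exists>g. good n g {a, b}"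
proof -
  define N where "N = n - 2 * a"
  define B where "B = b - a"
  have nN: "n = N + 2 * a" unfolding N_def using ab abn by simp
  have bB: "b = B + a" unfolding B_def using ab by simp
  have p2: "(2::nat) ^ n = 2 * 2 ^ (n - 1)" using n by (cases n) auto
  have "a * 2 ^ n + B * t = a * s + b * t" unfolding bB st[symmetric] by (simp add: algebra_simps)
  then have "a * 2 ^ n + B * t = n * 2 ^ (n - 1)" using eq by simp
  then have "a * 2 * 2 ^ (n - 1) + B * t = N * 2 ^ (n - 1) + 2 * a * 2 ^ (n - 1)"
    using p2 nN by (simp add: algebra_simps)
  then have Bt: "B * t = N * 2 ^ (n - 1)" by (simp add: algebra_simps)
  have "\<exists>g. good N g {0, B}"
  proof (cases "N = 0")
    case True then show ?thesis by (simp add: good0)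
  next
    case False
    then have "B * t > 0" using Bt by simp
    then have Bpos: "B > 0" by simp
    have "B dvd N * 2 ^ (n - 1)" using Bt by (metis dvd_triv_left)
    then obtain m q where mq: "B = 2 ^ m * q" "q dvd N" using factor2 Bpos by blast
    then obtain K where K: "N = q * K" by blast
    have qpos: "q > 0" using mq Bpos by simp
    have "B \<le> N" unfolding B_def N_def using abn ab by simp
    then have "q * 2 ^ m \<le> q * K" using mq K by (simp add: mult.commute)
    then have lo: "2 ^ m \<le> K" using qpos by simp
    have "t \<le> 2 ^ n" using st by simp
    then have "N * 2 ^ (n - 1) \<le> B * 2 ^ n" using Bt by (metis mult_le_mono2)
    then have "N * 2 ^ (n - 1) \<le> (2 * B) * 2 ^ (n - 1)" using p2 by (simp add: algebra_simps)
    then have "N \<le> 2 * B" by simp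
    then have "q * K \<le> q * (2 * 2 ^ m)" using mq K by (simp add: algebra_simps)
    then have hi: "K \<le> 2 * 2 ^ m" using qpos by simp
    define r where "r = K - 2 ^ m"
    have r: "r \<le> 2 ^ m" using hi unfolding r_def by simp
    have "N = q * 2 ^ m + q * r" using K lo unfolding r_def by (simp add: algebra_simps)
    moreover have "B = q * 2 ^ m" using mq by simp
    ultimately show ?thesis using core[OF r, of q] by simp
  qed
  then obtain g where "good N g {0, B}" by blast
  from pad_many[OF this, of a] show ?thesis using nN bB by (simp add: add.commute)
qed

lemma main_ord:
  fixes n a b s t :: nat
  assumes ab: "a \<le> b" and bn: "b \<le> n" and st: "s + t = 2 ^ n"
    and eq: "a * s + b * t = n * 2 ^ (n - 1)" and n: "n > 0"
  shows "\<exists>g. good n g {a, b}"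
proof (cases "a + b \<le> n")
  case True then show ?thesis using main_le assms by blast
next
  case False
  have p2: "(2::nat) ^ n = 2 * 2 ^ (n - 1)" using n by (cases n) auto
  have "(n - b) * t + (n - a) * s + (a * s + b * t) = n * (s + t)"
  proof -
    have 1: "(n - b) * t + b * t = n * t" using bn by (simp add: add_mult_distrib[symmetric])
    have 2: "(n - a) * s + a * s = n * s" using ab bn by (simp add: add_mult_distrib[symmetric])
    show ?thesis using 1 2 by (simp add: algebra_simps)
  qed
  then have "(n - b) * t + (n - a) * s + n * 2 ^ (n - 1) = n * (2 * 2 ^ (n - 1))" using eq st p2 by simp
  then have eq2: "(n - b) * t + (n - a) * s = n * 2 ^ (n - 1)" by simp
  have "\<exists>g. good n g {n - b, n - a}"
    using main_le[of "n - b" "n - a" n t s] ab bn False st eq2 n by (simp add: add.commute)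
  then obtain g where "good n g {n - b, n - a}" by blast
  from rev_good[OF this] have "good n (\<lambda>x i. \<not> g x i) {b, a}" using ab bn by simp
  then show ?thesis by (metis insert_commute)
qed


theorem theorem1:
  fixes n a b :: nat
  assumes "n > 0" and "a \<le> n" and "b \<le> n"
  shows "(\<exists>h. is_orientation n h \<and>
            (\<forall>v \<in> cube_vertices n. in_degree n h v = a \<or> in_degree n h v = b))
         \<longleftrightarrow> (\<exists>s t :: nat. s + t = 2 ^ n \<and> a * s + b * t = n * 2 ^ (n - 1))"
proof
  assume "\<exists>h. is_orientation n h \<and>
            (\<forall>v \<in> cube_vertices n. in_degree n h v = a \<or> in_degree n h v = b)"
  then obtain h where h: "is_orientation n h"
    and hv: "\<forall>v \<in> cube_vertices n. in_degree n h v = a \<or> in_degree n h v = b" by blast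
  define V where "V = cube_vertices n"
  define s where "s = card {v \<in> V. in_degree n h v = a}"
  define t where "t = card {v \<in> V. in_degree n h v \<noteq> a}"
  have fV: "finite V" unfolding V_def by (rule finite_V)
  have "s + t = card ({v \<in> V. in_degree n h v = a} \<union> {v \<in> V. in_degree n h v \<noteq> a})"
    unfolding s_def t_def using fV by (intro card_Un_disjoint[symmetric]) auto
  also have "{v \<in> V. in_degree n h v = a} \<union> {v \<in> V. in_degree n h v \<noteq> a} = V" by auto
  finally have st: "s + t = 2 ^ n" unfolding V_def using card_V by simp
  have "(\<Sum>v \<in> V. in_degree n h v) = (\<Sum>v \<in> V. if in_degree n h v = a then a else b)"
    using hv unfolding V_def by (intro sum.cong) auto
  also have "\<dots> = (\<Sum>v \<in> {v \<in> V. in_degree n h v = a}. a) + (\<Sum>v \<in> {v \<in> V. in_degree n h v \<noteq> a}. b)"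
  proof -
    let ?A = "{v \<in> V. in_degree n h v = a}" and ?B = "{v \<in> V. in_degree n h v \<noteq> a}"
    have VAB: "V = ?A \<union> ?B" by auto
    have "(\<Sum>v \<in> V. if in_degree n h v = a then a else b) = (\<Sum>v \<in> ?A \<union> ?B. if in_degree n h v = a then a else b)"
      using VAB by simp
    also have "\<dots> = (\<Sum>v \<in> ?A. if in_degree n h v = a then a else b) + (\<Sum>v \<in> ?B. if in_degree n h v = a then a else b)"
      using fV by (intro sum.union_disjoint) auto
    also have "(\<Sum>v \<in> ?A. if in_degree n h v = a then a else b) = (\<Sum>v \<in> ?A. a)" by (rule sum.cong) auto
    also have "(\<Sum>v \<in> ?B. if in_degree n h v = a then a else b) = (\<Sum>v \<in> ?B. b)" by (rule sum.cong) auto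
    finally show ?thesis .
  qed
  also have "\<dots> = a * s + b * t" unfolding s_def t_def by simp
  finally have sum1: "(\<Sum>v \<in> V. in_degree n h v) = a * s + b * t" .
  have p2: "(2::nat) ^ n = 2 * 2 ^ (n - 1)" using assms(1) by (cases n) auto
  have "2 * card (cube_edges n) = 2 * (n * 2 ^ (n - 1))" using card_E p2 by simp
  then have "card (cube_edges n) = n * 2 ^ (n - 1)" by simp
  then have "a * s + b * t = n * 2 ^ (n - 1)" using sum1 sum_indeg[OF h] unfolding V_def by simp
  then show "\<exists>s t :: nat. s + t = 2 ^ n \<and> a * s + b * t = n * 2 ^ (n - 1)" using st by blast
next
  assume "\<exists>s t :: nat. s + t = 2 ^ n \<and> a * s + b * t = n * 2 ^ (n - 1)"
  then obtain s t :: nat where st: "s + t = 2 ^ n" and eq: "a * s + b * t = n * 2 ^ (n - 1)" by blast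
  have "\<exists>g. good n g {a, b}"
  proof (cases "a \<le> b")
    case True then show ?thesis using main_ord[OF True assms(3) st eq assms(1)] by blast
  next
    case False
    then have "b \<le> a" by simp
    moreover have "t + s = 2 ^ n" using st by simp
    moreover have "b * t + a * s = n * 2 ^ (n - 1)" using eq by simp
    ultimately have "\<exists>g. good n g {b, a}" using main_ord assms by blast
    then show ?thesis by (simp add: insert_commute)
  qed
  then obtain g where "good n g {a, b}" by blast
  from bridge[OF this] show "\<exists>h. is_orientation n h \<and>
            (\<forall>v \<in> cube_vertices n. in_degree n h v = a \<or> in_degree n h v = b)" by blast
qed

end
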